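(* Let $(X,d)$ be a bounded metric space, let $S(X)$ be its Samuel compactification with compact topology $\tau$, and define on $S(X)$ the metric $\partial(a,b)=\sup\{|f(a)-f(b)| : f\in\mathrm{Lip}_1(X)\}$. Then every $\tau$-convergent sequence in $S(X)$ is $\partial$-convergent.
   Context: $S(X)$ is the compactification of $X$ associated with the algebra of bounded uniformly continuous real functions on $(X,d)$: it is a compact Hausdorff space containing a dense image of $X$ such that every bounded uniformly continuous $f\colon X\to\mathbb R$ extends uniquely to a continuous function on $S(X)$ (concretely, the closure of the image of $X$ in $\prod_f \overline{f(X)}$ under $x\mapsto (f(x))_f$). $\mathrm{Lip}_1(X)$ is the set of bounded $1$-Lipschitz functions $X\to\mathbb R$, each identified with its continuous extension to $S(X)$. The triple $(S(X),\tau,\partial)$ is a compact topometric space: the $\partial$-topology refines $\tau$ and $\partial$ is $\tau$-lower semicontinuous. *)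

theory Defs
  imports "HOL-Analysis.Analysis"
begin

text \<open>Bounded uniformly continuous real functions on X (normalised to 0 outside X,
  so that each function on X is represented exactly once).\<close>
definition BUC :: "'a::metric_space set \<Rightarrow> ('a \<Rightarrow> real) set" where
  "BUC X = {f. bounded (f ` X) \<and> uniformly_continuous_on X f \<and> (\<forall>x. x \<notin> X \<longrightarrow> f x = 0)}"

definition Lip1 :: "'a::metric_space set \<Rightarrow> ('a \<Rightarrow> real) set" where
  "Lip1 X = {f \<in> BUC X. \<forall>x\<in>X. \<forall>y\<in>X. \<bar>f x - f y\<bar> \<le> dist x y}"

definition samuel_ambient :: "'a::metric_space set \<Rightarrow> (('a \<Rightarrow> real) \<Rightarrow> real) topology" where
  "samuel_ambient X = product_topology (\<lambda>f. subtopology euclideanreal (closure (f ` X))) (BUC X)"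

definition samuel_embed :: "'a::metric_space set \<Rightarrow> 'a \<Rightarrow> (('a \<Rightarrow> real) \<Rightarrow> real)" where
  "samuel_embed X x = restrict (\<lambda>f. f x) (BUC X)"

definition samuel_top :: "'a::metric_space set \<Rightarrow> (('a \<Rightarrow> real) \<Rightarrow> real) topology" where
  "samuel_top X = subtopology (samuel_ambient X) (samuel_ambient X closure_of (samuel_embed X ` X))"

text \<open>The continuous extension of f \<in> BUC X to S(X) is the coordinate projection at f;
  \<partial>(a,b) = sup over Lip1 X of |f(a) - f(b)|.\<close>
definition samuel_dist :: "'a::metric_space set \<Rightarrow> (('a \<Rightarrow> real) \<Rightarrow> real) \<Rightarrow> (('a \<Rightarrow> real) \<Rightarrow> real) \<Rightarrow> real" where
  "samuel_dist X a b = (SUP f \<in> Lip1 X. \<bar>a f - b f\<bar>)"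

end

theory Submission
  imports Defs
begin


lemma samuel_approx:
  assumes p: "p \<in> topspace (samuel_top X)" and F: "finite F" "F \<subseteq> BUC X" and d: "\<delta> > 0"
  shows "\<exists>x\<in>X. \<forall>f\<in>F. \<bar>f x - p f\<bar> < \<delta>"
proof -
  let ?T = "samuel_ambient X"
  have pc: "p \<in> ?T closure_of (samuel_embed X ` X)"
    using p by (simp add: samuel_top_def)
  define U where "U = \<Inter>(insert (topspace ?T) ((\<lambda>f. {q \<in> topspace ?T. q f \<in> {y. \<bar>y - p f\<bar> < \<delta>}}) ` F))"
  have op: "openin ?T {q \<in> topspace ?T. q f \<in> {y. \<bar>y - p f\<bar> < \<delta>}}" if "f \<in> F" for f
  proof (rule openin_continuous_map_preimage)
    have "continuous_map ?T (subtopology euclideanreal (closure (f ` X))) (\<lambda>q. q f)"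
      unfolding samuel_ambient_def using that F by (intro continuous_map_product_projection) auto
    then show "continuous_map ?T euclideanreal (\<lambda>q. q f)"
      by (simp add: continuous_map_in_subtopology)
    have "{y. \<bar>y - p f\<bar> < \<delta>} = ball (p f) \<delta>" by (auto simp: dist_real_def abs_minus_commute)
    then show "openin euclideanreal {y. \<bar>y - p f\<bar> < \<delta>}" by simp
  qed
  have "openin ?T U" unfolding U_def using F op by (intro openin_Inter) auto
  moreover have "p \<in> U" unfolding U_def using pc d by (auto simp: in_closure_of)
  ultimately obtain y where y: "y \<in> samuel_embed X ` X" "y \<in> U"
    using pc unfolding in_closure_of by blast
  then obtain x where x: "x \<in> X" "y = samuel_embed X x" by auto
  have "\<forall>f\<in>F. \<bar>f x - p f\<bar> < \<delta>"
  proof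
    fix f assume f: "f \<in> F"
    then have "y f = f x" using x F by (auto simp: samuel_embed_def)
    with y f show "\<bar>f x - p f\<bar> < \<delta>" unfolding U_def by auto
  qed
  with x show ?thesis by blast
qed

lemma samuel_conv:
  assumes "limitin (samuel_top X) \<sigma> a sequentially" "f \<in> BUC X"
  shows "(\<lambda>n. \<sigma> n f) \<longlonglongrightarrow> a f"
proof -
  have "limitin (samuel_ambient X) \<sigma> a sequentially"
    using assms(1) by (simp add: samuel_top_def limitin_subtopology)
  then have "limitin (subtopology euclideanreal (closure (f ` X))) (\<lambda>n. \<sigma> n f) (a f) sequentially"
    using assms(2) by (simp add: samuel_ambient_def limitin_componentwise)
  then show ?thesis by (simp add: limitin_subtopology)
qed

lemma subseq_thresh:
  fixes P :: "nat \<Rightarrow> bool" and N :: "nat \<Rightarrow> nat"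
  assumes "\<forall>M. \<exists>n\<ge>M. P n"
  shows "\<exists>r::nat\<Rightarrow>nat. strict_mono r \<and> (\<forall>j. P (r j)) \<and> (\<forall>i j. i<j \<longrightarrow> N (r i) \<le> r j)"
proof -
  define nxt where "nxt m = (LEAST k. m < k \<and> P k)" for m
  have nxt: "m < nxt m \<and> P (nxt m)" for m
  proof -
    obtain k where "k \<ge> Suc m" "P k" using assms by blast
    then have "\<exists>k. m < k \<and> P k" by (metis Suc_le_eq)
    then show ?thesis unfolding nxt_def by (rule LeastI_ex)
  qed
  define N' where "N' m = Max (N ` {..m}) + m" for m
  have N'mono: "N' m \<le> N' m'" if "m \<le> m'" for m m'
  proof -
    have "Max (N ` {..m}) \<le> Max (N ` {..m'})"
      using that by (intro Max_mono) auto
    then show ?thesis using that unfolding N'_def by linarith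
  qed
  have N'ge: "N m \<le> N' m" "m \<le> N' m" for m unfolding N'_def
    by (auto intro: trans_le_add1)
  define r where "r = rec_nat (nxt 0) (\<lambda>_ k. nxt (N' k))"
  have r0: "r 0 = nxt 0" and rS: "r (Suc j) = nxt (N' (r j))" for j by (simp_all add: r_def)
  have sm: "strict_mono r"
  proof (rule strict_monoI_Suc)
    fix j show "r j < r (Suc j)" using nxt[of "N' (r j)"] N'ge(2)[of "r j"] rS[of j] by linarith
  qed
  have Pr: "P (r j)" for j by (cases j) (use nxt r0 rS in auto)
  have th: "N (r i) \<le> r j" if ij: "i < j" for i j
  proof -
    obtain k where k: "j = Suc k" "i \<le> k" using ij by (intro that[of "j - 1"]) auto
    have "r i \<le> r k" using sm k(2) by (simp add: strict_mono_less_eq)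
    then have "N (r i) \<le> N' (r k)" using N'ge(1)[of "r i"] N'mono by (meson le_trans)
    also have "\<dots> < r j" using k(1) rS nxt by auto
    finally show ?thesis by simp
  qed
  have "strict_mono r \<and> (\<forall>j. P (r j)) \<and> (\<forall>i j. i<j \<longrightarrow> N (r i) \<le> r j)"
    using sm Pr th by simp
  then show ?thesis by (rule exI[where x=r])
qed



lemma Lip1_BUC: "f \<in> Lip1 X \<Longrightarrow> f \<in> BUC X" by (simp add: Lip1_def)

lemma zero_Lip1: "(\<lambda>_. 0) \<in> Lip1 X"
proof -
  have "(\<lambda>_. 0::real) ` X \<subseteq> {0}" by auto
  then have "bounded ((\<lambda>_. 0::real) ` X)" by (rule bounded_subset[rotated]) simp
  then show ?thesis by (simp add: Lip1_def BUC_def uniformly_continuous_on_const)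
qed

lemma eq_of_close:
  fixes u v c :: real
  assumes "c > 0" "\<And>\<delta>. \<delta> > 0 \<Longrightarrow> \<delta> \<le> c \<Longrightarrow> \<bar>u - v\<bar> < \<delta>"
  shows "u = v"
proof (rule ccontr)
  assume "u \<noteq> v"
  then have "\<bar>u - v\<bar> > 0" by simp
  moreover have "min \<bar>u - v\<bar> c \<le> c" by simp
  ultimately have "\<bar>u - v\<bar> < min \<bar>u - v\<bar> c" using assms(1) by (intro assms(2)) auto
  then show False by simp
qed

lemma samuel_bound:
  assumes D: "\<And>x y. x \<in> X \<Longrightarrow> y \<in> X \<Longrightarrow> dist x y \<le> D"
    and p: "p \<in> topspace (samuel_top X)" and q: "q \<in> topspace (samuel_top X)"
    and f: "f \<in> Lip1 X"
  shows "\<bar>p f - q f\<bar> \<le> D"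
proof -
  have fB: "f \<in> BUC X" using f by (simp add: Lip1_def)
  have dlt: "\<bar>p f - q f\<bar> < D + 2 * \<delta>" if d: "\<delta> > 0" for \<delta>
  proof -
    obtain x where x: "x \<in> X" "\<bar>f x - p f\<bar> < \<delta>"
      using samuel_approx[OF p, of "{f}" \<delta>] fB d by auto
    obtain y where y: "y \<in> X" "\<bar>f y - q f\<bar> < \<delta>"
      using samuel_approx[OF q, of "{f}" \<delta>] fB d by auto
    have "\<bar>f x - f y\<bar> \<le> dist x y" using f x y by (auto simp: Lip1_def)
    then show ?thesis using D[OF x(1) y(1)] x y by linarith
  qed
  show ?thesis
  proof (rule field_le_epsilon)
    fix e :: real assume e: "e > 0"
    have "\<bar>p f - q f\<bar> < D + 2 * (e / 2)" using dlt[of "e / 2"] e by simp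
    then show "\<bar>p f - q f\<bar> \<le> D + e" by simp
  qed
qed


lemma sd_facts:
  assumes D: "\<And>x y. x \<in> X \<Longrightarrow> y \<in> X \<Longrightarrow> dist x y \<le> D"
    and p: "p \<in> topspace (samuel_top X)" and q: "q \<in> topspace (samuel_top X)"
  shows "0 \<le> samuel_dist X p q"
    and "samuel_dist X p q > e \<Longrightarrow> \<exists>f\<in>Lip1 X. \<bar>p f - q f\<bar> > e"
proof -
  have bdd: "bdd_above ((\<lambda>f. \<bar>p f - q f\<bar>) ` Lip1 X)"
    using samuel_bound[OF D p q] by (intro bdd_aboveI[of _ D]) auto
  have ne: "Lip1 X \<noteq> {}" using zero_Lip1 by blast
  show "0 \<le> samuel_dist X p q"
    unfolding samuel_dist_def
    by (rule order_trans[OF abs_ge_zero cSUP_upper[OF zero_Lip1 bdd]])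
  show "samuel_dist X p q > e \<Longrightarrow> \<exists>f\<in>Lip1 X. \<bar>p f - q f\<bar> > e"
    unfolding samuel_dist_def using less_cSUP_iff[OF ne bdd] by blast
qed

theorem mainTheorem20:
  fixes X :: "'a::metric_space set"
    and \<sigma> :: "nat \<Rightarrow> (('a \<Rightarrow> real) \<Rightarrow> real)"
    and a :: "('a \<Rightarrow> real) \<Rightarrow> real"
  assumes "bounded X"
    and "\<And>n. \<sigma> n \<in> topspace (samuel_top X)"
    and "limitin (samuel_top X) \<sigma> a sequentially"
  shows "\<exists>b \<in> topspace (samuel_top X). (\<lambda>n. samuel_dist X (\<sigma> n) b) \<longlonglongrightarrow> 0"
proof -
  have atop: "a \<in> topspace (samuel_top X)" using assms(3) by (simp add: limitin_topspace)
  obtain D where D: "\<And>x y. x \<in> X \<Longrightarrow> y \<in> X \<Longrightarrow> dist x y \<le> D"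
    using assms(1) unfolding bounded_two_points by blast
  have conv: "\<And>f. f \<in> BUC X \<Longrightarrow> (\<lambda>n. \<sigma> n f) \<longlonglongrightarrow> a f"
    using samuel_conv[OF assms(3)] .
  have "(\<lambda>n. samuel_dist X (\<sigma> n) a) \<longlonglongrightarrow> 0"
  proof (rule ccontr)
    assume nc: "\<not> (\<lambda>n. samuel_dist X (\<sigma> n) a) \<longlonglongrightarrow> 0"
    have sdnn: "0 \<le> samuel_dist X (\<sigma> n) a" for n using sd_facts(1)[OF D assms(2) atop] .
    have "\<not> (\<forall>r>0. \<exists>no. \<forall>n\<ge>no. \<bar>samuel_dist X (\<sigma> n) a\<bar> < r)"
      using nc unfolding LIMSEQ_iff by simp
    then obtain e where e0: "e > 0" and e1: "\<forall>M. \<exists>n\<ge>M. \<bar>samuel_dist X (\<sigma> n) a\<bar> \<ge> e"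
      by (auto simp: not_less)
    have e: "e > 0" "\<forall>M. \<exists>n\<ge>M. samuel_dist X (\<sigma> n) a \<ge> e"
      using e0 e1 sdnn by auto
    define \<epsilon> where "\<epsilon> = e / 4"
    have \<epsilon>: "\<epsilon> > 0" using e by (simp add: \<epsilon>_def)
    define bad where "bad n \<longleftrightarrow> samuel_dist X (\<sigma> n) a > 3 * \<epsilon>" for n
    have freq: "\<forall>M. \<exists>n\<ge>M. bad n"
    proof
      fix M
      obtain n where n: "n \<ge> M" "samuel_dist X (\<sigma> n) a \<ge> e" using e(2) by blast
      have "3 * \<epsilon> < e" using e(1) by (simp add: \<epsilon>_def)
      then have "bad n" using n(2) unfolding bad_def by linarith
      then show "\<exists>n\<ge>M. bad n" using n(1) by blast
    qed
    have "\<forall>n. \<exists>f. f \<in> Lip1 X \<and> (bad n \<longrightarrow> \<bar>\<sigma> n f - a f\<bar> > 3 * \<epsilon>)"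
    proof
      fix n
      show "\<exists>f. f \<in> Lip1 X \<and> (bad n \<longrightarrow> \<bar>\<sigma> n f - a f\<bar> > 3 * \<epsilon>)"
      proof (cases "bad n")
        case True
        then show ?thesis using sd_facts(2)[OF D assms(2) atop, of "3 * \<epsilon>" n] unfolding bad_def by blast
      next
        case False
        then show ?thesis using zero_Lip1 by blast
      qed
    qed
    then obtain F where F: "\<And>n. F n \<in> Lip1 X" "\<And>n. bad n \<Longrightarrow> \<bar>\<sigma> n (F n) - a (F n)\<bar> > 3 * \<epsilon>"
      by (metis (no_types))
    have FB: "F n \<in> BUC X" for n using F(1) by (simp add: Lip1_def)
    have "\<forall>k. \<exists>N. \<forall>m\<ge>N. \<bar>\<sigma> m (F k) - a (F k)\<bar> < \<epsilon> / 2"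
    proof
      fix k
      have "(\<lambda>n. \<sigma> n (F k)) \<longlonglongrightarrow> a (F k)" using conv FB by blast
      then show "\<exists>N. \<forall>m\<ge>N. \<bar>\<sigma> m (F k) - a (F k)\<bar> < \<epsilon> / 2"
        unfolding LIMSEQ_iff real_norm_def using \<epsilon> half_gt_zero by blast
    qed
    then obtain Nf where Nf: "\<And>k m. m \<ge> Nf k \<Longrightarrow> \<bar>\<sigma> m (F k) - a (F k)\<bar> < \<epsilon> / 2"
      by metis
    obtain r :: "nat \<Rightarrow> nat" where r: "strict_mono r" "\<And>j. bad (r j)" "\<And>i j. i < j \<Longrightarrow> Nf (r i) \<le> r j"
      using subseq_thresh[OF freq, of Nf] by blast
    define A where "A j = {x\<in>X. \<bar>F (r j) x - \<sigma> (r j) (F (r j))\<bar> < \<epsilon> \<and> (\<forall>i<j. \<bar>F (r i) x - a (F (r i))\<bar> < \<epsilon>)}" for j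
    have approxA: "\<exists>x\<in>A j. \<bar>h x - \<sigma> (r j) h\<bar> < \<delta>" if h: "h \<in> BUC X" and d: "\<delta> > 0" "\<delta> \<le> \<epsilon>/2" for j h \<delta>
    proof -
      have fin: "finite (insert h (F ` r ` {..j}))" by simp
      have sub: "insert h (F ` r ` {..j}) \<subseteq> BUC X" using h FB by auto
      obtain x where x: "x \<in> X" "\<forall>f\<in>insert h (F ` r ` {..j}). \<bar>f x - \<sigma> (r j) f\<bar> < \<delta>"
        using samuel_approx[OF assms(2) fin sub d(1)] by blast
      have "x \<in> A j"
        unfolding A_def
      proof (intro CollectI conjI allI impI)
        show "x \<in> X" by fact
        have "F (r j) \<in> insert h (F ` r ` {..j})" by simp
        then have "\<bar>F (r j) x - \<sigma> (r j) (F (r j))\<bar> < \<delta>" using x(2) by blast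
        then show "\<bar>F (r j) x - \<sigma> (r j) (F (r j))\<bar> < \<epsilon>" using d \<epsilon> by linarith
        fix i assume ij: "i < j"
        have "F (r i) \<in> insert h (F ` r ` {..j})" using ij by simp
        then have 1: "\<bar>F (r i) x - \<sigma> (r j) (F (r i))\<bar> < \<delta>" using x(2) by blast
        have 2: "\<bar>\<sigma> (r j) (F (r i)) - a (F (r i))\<bar> < \<epsilon> / 2" using Nf r(3)[OF ij] by blast
        show "\<bar>F (r i) x - a (F (r i))\<bar> < \<epsilon>" using 1 2 d by linarith
      qed
      then show ?thesis using x(2) by blast
    qed
    have sep: "dist x y > \<epsilon>" if ij: "i < j" and x: "x \<in> A j" and y: "y \<in> A i" for i j x y
    proof -
      let ?f = "F (r i)"
      have 1: "\<bar>?f y - \<sigma> (r i) ?f\<bar> < \<epsilon>" using y by (simp add: A_def)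
      have 2: "\<bar>?f x - a ?f\<bar> < \<epsilon>" using x ij by (simp add: A_def)
      have 3: "\<bar>\<sigma> (r i) ?f - a ?f\<bar> > 3 * \<epsilon>" using F(2) r(2) by blast
      have 4: "\<bar>?f x - ?f y\<bar> \<le> dist x y" using F(1)[of "r i"] x y by (auto simp: Lip1_def A_def)
      show ?thesis using 1 2 3 4 by linarith
    qed
    define Os where "Os = (\<Union>j\<in>{j. odd j}. A j)"
    define g where "g x = (if x \<in> X then min (infdist x Os) \<epsilon> else 0)" for x
    have gB: "g \<in> BUC X"
    proof -
      have "bounded (g ` X)"
        unfolding bounded_iff using \<epsilon> by (intro exI[of _ \<epsilon>]) (auto simp: g_def infdist_nonneg)
      moreover have "uniformly_continuous_on X g"
        unfolding uniformly_continuous_on_def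
      proof (intro allI impI exI[of _ "_"] conjI ballI)
        fix d :: real assume d: "d > 0"
        show "d > 0" by fact
        fix x y assume xy: "x \<in> X" "y \<in> X" "dist y x < d"
        have "\<bar>min (infdist y Os) \<epsilon> - min (infdist x Os) \<epsilon>\<bar> \<le> \<bar>infdist y Os - infdist x Os\<bar>"
          by linarith
        also have "\<dots> \<le> dist y x" by (rule infdist_triangle_abs)
        finally show "dist (g y) (g x) < d" using xy by (simp add: g_def dist_real_def)
      qed
      moreover have "\<forall>x. x \<notin> X \<longrightarrow> g x = 0" by (simp add: g_def)
      ultimately show ?thesis by (simp add: BUC_def)
    qed
    have Zero: "(\<lambda>_. 0) \<in> BUC X" using zero_Lip1 by (simp add: Lip1_def)
    have Ane: "A j \<noteq> {}" for j using approxA[OF Zero, of "\<epsilon>/2" j] \<epsilon> by auto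
    have One: "Os \<noteq> {}"
    proof -
      have "A 1 \<subseteq> Os" unfolding Os_def by (rule UN_upper) simp
      then show ?thesis using Ane[of 1] by blast
    qed
    have g_even: "g x = \<epsilon>" if "even j" "x \<in> A j" for j x
    proof -
      have xX: "x \<in> X" using that by (simp add: A_def)
      have all: "\<epsilon> \<le> dist x y" if yO: "y \<in> Os" for y
      proof -
        from yO obtain i where i: "odd i" "y \<in> A i" unfolding Os_def by blast
        have ij: "i \<noteq> j" using i(1) \<open>even j\<close> by auto
        have "dist x y > \<epsilon>"
        proof (cases "i < j")
          case True
          show ?thesis using sep[OF True \<open>x \<in> A j\<close> i(2)] by simp
        next
          case False
          with ij have "j < i" by simp
          then show ?thesis using sep[OF _ i(2) \<open>x \<in> A j\<close>] by (simp add: dist_commute)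
        qed
        then show ?thesis by simp
      qed
      have "\<epsilon> \<le> infdist x Os"
        unfolding infdist_notempty[OF One] by (rule cINF_greatest[OF One all])
      then show ?thesis using xX by (simp add: g_def)
    qed
    have g_odd: "g x = 0" if "odd j" "x \<in> A j" for j x
    proof -
      have "x \<in> Os" using that by (auto simp: Os_def)
      then show ?thesis using \<epsilon> by (simp add: g_def)
    qed
    have sg_even: "\<sigma> (r j) g = \<epsilon>" if "even j" for j
    proof (rule sym, rule eq_of_close[of "\<epsilon>/2"])
      show "\<epsilon>/2 > 0" using \<epsilon> by simp
      fix \<delta> :: real assume "\<delta> > 0" "\<delta> \<le> \<epsilon>/2"
      then obtain x where "x \<in> A j" "\<bar>g x - \<sigma> (r j) g\<bar> < \<delta>" using approxA[OF gB] by blast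
      then show "\<bar>\<epsilon> - \<sigma> (r j) g\<bar> < \<delta>" using g_even that by simp
    qed
    have sg_odd: "\<sigma> (r j) g = 0" if "odd j" for j
    proof (rule sym, rule eq_of_close[of "\<epsilon>/2"])
      show "\<epsilon>/2 > 0" using \<epsilon> by simp
      fix \<delta> :: real assume "\<delta> > 0" "\<delta> \<le> \<epsilon>/2"
      then obtain x where "x \<in> A j" "\<bar>g x - \<sigma> (r j) g\<bar> < \<delta>" using approxA[OF gB] by blast
      then show "\<bar>0 - \<sigma> (r j) g\<bar> < \<delta>" using g_odd that by simp
    qed
    have cg: "(\<lambda>n. \<sigma> n g) \<longlonglongrightarrow> a g" using conv gB by blast
    have sm1: "strict_mono (\<lambda>k. r (2 * k))" by (intro strict_monoI) (simp add: strict_mono_less[OF r(1)])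
    have sm2: "strict_mono (\<lambda>k. r (2 * k + 1))" by (intro strict_monoI) (simp add: strict_mono_less[OF r(1)])
    have "(\<lambda>k. \<sigma> (r (2 * k)) g) \<longlonglongrightarrow> a g"
      using LIMSEQ_subseq_LIMSEQ[OF cg sm1] by (simp add: o_def)
    moreover have "(\<lambda>k. \<sigma> (r (2 * k)) g) = (\<lambda>k. \<epsilon>)" using sg_even by auto
    ultimately have "(\<lambda>k. \<epsilon>) \<longlonglongrightarrow> a g" by simp
    then have "a g = \<epsilon>" using LIMSEQ_unique[OF _ tendsto_const] by blast
    have "(\<lambda>k. \<sigma> (r (2 * k + 1)) g) \<longlonglongrightarrow> a g"
      using LIMSEQ_subseq_LIMSEQ[OF cg sm2] by (simp add: o_def)
    moreover have "(\<lambda>k. \<sigma> (r (2 * k + 1)) g) = (\<lambda>k. 0)" using sg_odd by auto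
    ultimately have "(\<lambda>k. 0) \<longlonglongrightarrow> a g" by simp
    then have "a g = 0" using LIMSEQ_unique[OF _ tendsto_const] by blast
    with \<open>a g = \<epsilon>\<close> \<epsilon> show False by simp
  qed
  with atop show ?thesis by blast
qed

end
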